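(* Assume $\alpha=\beta\ge1$ and $p\in\mathbb R\setminus\{0,1\}$. Let $\mathbf U=(U,V)$ with multiplier $\Lambda$ be the similarity profile and let $\mathbf u=(u,v)$ be a solution of the scaled system with $\rho=u/U$, $\zeta=v/V$. Then $\frac{\mathrm d}{\mathrm d\tau}\mathcal E_p(\mathbf u(\tau)|\mathbf U)=-\mathcal D_p(\rho,\zeta)$ with $$\mathcal D_p(\rho,\zeta)=\mathcal I_{p,\mathrm{Fisher}}(\rho,\zeta)+\tfrac12\,\mathcal E_p(\mathbf u|\mathbf U)-\mathcal I_{p,\Lambda}(\rho,\zeta)+e^\tau\mathcal D_{p,\mathrm{react}}(\rho,\zeta),$$ where $\mathcal D_{p,\mathrm{react}}(\rho,\zeta):=\int_{\mathbb R}kU^\alpha\frac{\alpha}{p-1}\big(\zeta^{p-1}-\rho^{p-1}\big)\big(\zeta^\alpha-\rho^\alpha\big)\mathrm dy\ge0$, $\mathcal I_{p,\mathrm{Fisher}}(\rho,\zeta):=\int_{\mathbb R}\big(d_1U\rho^{p-2}\rho_y^2+d_2V\zeta^{p-2}\zeta_y^2\big)\mathrm dy\ge0$, and $\mathcal I_{p,\Lambda}(\rho,\zeta):=\int_{\mathbb R}\frac1p\big(\zeta^p-\rho^p\big)\alpha\Lambda\,\mathrm dy$.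
   Context: Fix $d_1,d_2,k>0$, real stoichiometric coefficients $\alpha,\beta\ge1$ and $A_-,A_+>0$. The similarity profile is a triple $(U,V,\Lambda)$ with $U,V\in\mathrm C^2(\mathbb R)$ positive, bounded and bounded away from $0$, $\Lambda:\mathbb R\to\mathbb R$, satisfying $d_1U''+\tfrac y2U'+\alpha\Lambda=0$, $d_2V''+\tfrac y2V'-\beta\Lambda=0$, $U^\alpha=V^\beta$ on $\mathbb R$, and $U(\pm\infty)=A_\pm^\beta$, $V(\pm\infty)=A_\pm^\alpha$. The scaled system is $u_\tau=d_1u_{yy}+\tfrac y2u_y+e^\tau\alpha k(v^\beta-u^\alpha)$, $v_\tau=d_2v_{yy}+\tfrac y2v_y-e^\tau\beta k(v^\beta-u^\alpha)$ for $\tau>0$, $y\in\mathbb R$, with $(u,v)(\tau,\pm\infty)=(A_\pm^\beta,A_\pm^\alpha)$. A "solution" is a positive classical solution for which the relative entropy is finite and differentiable in $\tau$ with differentiation under the integral allowed, all integrals appearing are finite, and integrations by parts over $\mathbb R$ produce no boundary terms ($\rho,\zeta\to1$ at $\pm\infty$ with sufficient decay). Relative densities $\rho=u/U$, $\zeta=v/V$. Entropy functions: $F_p(z)=\frac{1}{p(p-1)}(z^p-pz+p-1)$ for $p\notin\{0,1\}$, $F_1(z)=z\log z-z+1$, $F_0(z)=z-\log z-1$. Relative entropy $\mathcal E_p(\mathbf u|\mathbf U)=\int_{\mathbb R}\big(UF_p(\rho)+VF_p(\zeta)\big)\mathrm dy$. *)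

theory Defs
  imports "HOL-Analysis.Analysis"
begin

definition Fent :: "real \<Rightarrow> real \<Rightarrow> real" where
  "Fent p z = (if p = 1 then z * ln z - z + 1
               else if p = 0 then z - ln z - 1
               else (z powr p - p * z + p - 1) / (p * (p - 1)))"

text \<open>Derivative of the entropy function (used only to phrase integrability hypotheses).\<close>
definition Fent' :: "real \<Rightarrow> real \<Rightarrow> real" where
  "Fent' p z = (if p = 1 then ln z
                else if p = 0 then 1 - 1 / z
                else (z powr (p - 1) - 1) / (p - 1))"

definition C2 :: "(real \<Rightarrow> real) \<Rightarrow> bool" where
  "C2 f \<longleftrightarrow> (\<forall>y. (f has_real_derivative deriv f y) (at y))
          \<and> (\<forall>y. (deriv f has_real_derivative deriv (deriv f) y) (at y))
          \<and> continuous_on UNIV (deriv (deriv f))"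

definition similarity_profile ::
  "real \<Rightarrow> real \<Rightarrow> real \<Rightarrow> real \<Rightarrow> real \<Rightarrow> real \<Rightarrow>
   (real \<Rightarrow> real) \<Rightarrow> (real \<Rightarrow> real) \<Rightarrow> (real \<Rightarrow> real) \<Rightarrow> bool" where
  "similarity_profile d1 d2 \<alpha> \<beta> Am Ap U V \<Lambda> \<longleftrightarrow>
     C2 U \<and> C2 V
   \<and> (\<forall>y. U y > 0 \<and> V y > 0)
   \<and> bounded (range U) \<and> bounded (range V)
   \<and> (\<exists>c>0. \<forall>y. U y \<ge> c \<and> V y \<ge> c)
   \<and> (\<forall>y. d1 * deriv (deriv U) y + y / 2 * deriv U y + \<alpha> * \<Lambda> y = 0)
   \<and> (\<forall>y. d2 * deriv (deriv V) y + y / 2 * deriv V y - \<beta> * \<Lambda> y = 0)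
   \<and> (\<forall>y. U y powr \<alpha> = V y powr \<beta>)
   \<and> (U \<longlongrightarrow> Ap powr \<beta>) at_top \<and> (U \<longlongrightarrow> Am powr \<beta>) at_bot
   \<and> (V \<longlongrightarrow> Ap powr \<alpha>) at_top \<and> (V \<longlongrightarrow> Am powr \<alpha>) at_bot"

definition rel_entropy ::
  "real \<Rightarrow> (real \<Rightarrow> real) \<Rightarrow> (real \<Rightarrow> real) \<Rightarrow> (real \<Rightarrow> real) \<Rightarrow> (real \<Rightarrow> real) \<Rightarrow> real" where
  "rel_entropy p U V u v =
     (\<integral>y. U y * Fent p (u y / U y) + V y * Fent p (v y / V y) \<partial>lborel)"

definition fisher_info ::
  "real \<Rightarrow> real \<Rightarrow> real \<Rightarrow> (real \<Rightarrow> real) \<Rightarrow> (real \<Rightarrow> real)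
   \<Rightarrow> (real \<Rightarrow> real) \<Rightarrow> (real \<Rightarrow> real) \<Rightarrow> real" where
  "fisher_info p d1 d2 U V \<rho> \<zeta> =
     (\<integral>y. d1 * U y * \<rho> y powr (p - 2) * (deriv \<rho> y)\<^sup>2
          + d2 * V y * \<zeta> y powr (p - 2) * (deriv \<zeta> y)\<^sup>2 \<partial>lborel)"

definition lambda_info ::
  "real \<Rightarrow> real \<Rightarrow> (real \<Rightarrow> real) \<Rightarrow> (real \<Rightarrow> real) \<Rightarrow> (real \<Rightarrow> real) \<Rightarrow> real" where
  "lambda_info p \<alpha> \<Lambda> \<rho> \<zeta> =
     (\<integral>y. 1 / p * (\<zeta> y powr p - \<rho> y powr p) * \<alpha> * \<Lambda> y \<partial>lborel)"

definition react_diss ::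
  "real \<Rightarrow> real \<Rightarrow> real \<Rightarrow> (real \<Rightarrow> real) \<Rightarrow> (real \<Rightarrow> real) \<Rightarrow> (real \<Rightarrow> real) \<Rightarrow> real" where
  "react_diss p k \<alpha> U \<rho> \<zeta> =
     (\<integral>y. k * U y powr \<alpha> * (\<alpha> / (p - 1))
          * (\<zeta> y powr (p - 1) - \<rho> y powr (p - 1)) * (\<zeta> y powr \<alpha> - \<rho> y powr \<alpha>) \<partial>lborel)"

definition scaled_classical_solution ::
  "real \<Rightarrow> real \<Rightarrow> real \<Rightarrow> real \<Rightarrow> real \<Rightarrow> real \<Rightarrow> real \<Rightarrow>
   (real \<Rightarrow> real \<Rightarrow> real) \<Rightarrow> (real \<Rightarrow> real \<Rightarrow> real) \<Rightarrow> bool" where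
  "scaled_classical_solution d1 d2 k \<alpha> \<beta> Am Ap u v \<longleftrightarrow>
     (\<forall>t>0. \<forall>y. u t y > 0 \<and> v t y > 0)
   \<and> (\<forall>t>0. C2 (u t) \<and> C2 (v t))
   \<and> (\<forall>t>0. \<forall>y. ((\<lambda>s. u s y) has_real_derivative deriv (\<lambda>s. u s y) t) (at t)
                \<and> ((\<lambda>s. v s y) has_real_derivative deriv (\<lambda>s. v s y) t) (at t))
   \<and> continuous_on ({0<..} \<times> UNIV) (\<lambda>(t, y). u t y)
   \<and> continuous_on ({0<..} \<times> UNIV) (\<lambda>(t, y). v t y)
   \<and> continuous_on ({0<..} \<times> UNIV) (\<lambda>(t, y). deriv (\<lambda>s. u s y) t)
   \<and> continuous_on ({0<..} \<times> UNIV) (\<lambda>(t, y). deriv (\<lambda>s. v s y) t)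
   \<and> continuous_on ({0<..} \<times> UNIV) (\<lambda>(t, y). deriv (u t) y)
   \<and> continuous_on ({0<..} \<times> UNIV) (\<lambda>(t, y). deriv (v t) y)
   \<and> continuous_on ({0<..} \<times> UNIV) (\<lambda>(t, y). deriv (deriv (u t)) y)
   \<and> continuous_on ({0<..} \<times> UNIV) (\<lambda>(t, y). deriv (deriv (v t)) y)
   \<and> (\<forall>t>0. \<forall>y. deriv (\<lambda>s. u s y) t =
          d1 * deriv (deriv (u t)) y + y / 2 * deriv (u t) y
          + exp t * \<alpha> * k * (v t y powr \<beta> - u t y powr \<alpha>))
   \<and> (\<forall>t>0. \<forall>y. deriv (\<lambda>s. v s y) t =
          d2 * deriv (deriv (v t)) y + y / 2 * deriv (v t) y
          - exp t * \<beta> * k * (v t y powr \<beta> - u t y powr \<alpha>))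
   \<and> (\<forall>t>0. (u t \<longlongrightarrow> Ap powr \<beta>) at_top \<and> (u t \<longlongrightarrow> Am powr \<beta>) at_bot
          \<and> (v t \<longlongrightarrow> Ap powr \<alpha>) at_top \<and> (v t \<longlongrightarrow> Am powr \<alpha>) at_bot)"

text \<open>Finiteness of the integrals appearing in the entropy computation for one component
  w with reference profile W, diffusion d, profile source term L (= \<alpha>\<Lambda> for u, -\<beta>\<Lambda> for v)
  and reaction term R, together with vanishing of the boundary terms of the two
  integrations by parts over \<real>.\<close>
definition component_admissible ::
  "real \<Rightarrow> real \<Rightarrow> (real \<Rightarrow> real) \<Rightarrow> (real \<Rightarrow> real) \<Rightarrow> (real \<Rightarrow> real \<Rightarrow> real)
   \<Rightarrow> (real \<Rightarrow> real \<Rightarrow> real) \<Rightarrow> bool" where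
  "component_admissible p d W L R w \<longleftrightarrow>
     (\<forall>t>0. let r = (\<lambda>y. w t y / W y) in
        integrable lborel (\<lambda>y. W y * Fent p (r y))
      \<and> integrable lborel (\<lambda>y. d * W y * r y powr (p - 2) * (deriv r y)\<^sup>2)
      \<and> integrable lborel (\<lambda>y. L y * Fent p (r y))
      \<and> integrable lborel (\<lambda>y. L y * r y * Fent' p (r y))
      \<and> integrable lborel (\<lambda>y. Fent' p (r y) * R t y)
      \<and> integrable lborel (\<lambda>y. Fent' p (r y) * d * deriv (\<lambda>z. W z * deriv r z) y)
      \<and> integrable lborel (\<lambda>y. Fent' p (r y) * (d * deriv W y + y / 2 * W y) * deriv r y)
      \<and> ((\<lambda>y. W y * Fent' p (r y) * deriv r y) \<longlongrightarrow> 0) at_top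
      \<and> ((\<lambda>y. W y * Fent' p (r y) * deriv r y) \<longlongrightarrow> 0) at_bot
      \<and> ((\<lambda>y. (d * deriv W y + y / 2 * W y) * Fent p (r y)) \<longlongrightarrow> 0) at_top
      \<and> ((\<lambda>y. (d * deriv W y + y / 2 * W y) * Fent p (r y)) \<longlongrightarrow> 0) at_bot)"

text \<open>A "solution" in the sense of the paper (for the entropy index p): a positive classical
  solution whose relative entropy is finite and differentiable in \<tau>, with differentiation
  under the integral sign allowed, all integrals finite and no boundary terms.\<close>
definition scaled_solution ::
  "real \<Rightarrow> real \<Rightarrow> real \<Rightarrow> real \<Rightarrow> real \<Rightarrow> real \<Rightarrow> real \<Rightarrow> real \<Rightarrow>
   (real \<Rightarrow> real) \<Rightarrow> (real \<Rightarrow> real) \<Rightarrow> (real \<Rightarrow> real) \<Rightarrow>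
   (real \<Rightarrow> real \<Rightarrow> real) \<Rightarrow> (real \<Rightarrow> real \<Rightarrow> real) \<Rightarrow> bool" where
  "scaled_solution p d1 d2 k \<alpha> \<beta> Am Ap U V \<Lambda> u v \<longleftrightarrow>
     scaled_classical_solution d1 d2 k \<alpha> \<beta> Am Ap u v
   \<and> component_admissible p d1 U (\<lambda>y. \<alpha> * \<Lambda> y)
       (\<lambda>t y. exp t * \<alpha> * k * (v t y powr \<beta> - u t y powr \<alpha>)) u
   \<and> component_admissible p d2 V (\<lambda>y. - \<beta> * \<Lambda> y)
       (\<lambda>t y. - exp t * \<beta> * k * (v t y powr \<beta> - u t y powr \<alpha>)) v
   \<and> (\<forall>t>0.
        integrable lborel (\<lambda>y. deriv (\<lambda>s. U y * Fent p (u s y / U y)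
                                         + V y * Fent p (v s y / V y)) t)
      \<and> ((\<lambda>s. rel_entropy p U V (u s) (v s)) has_real_derivative
           (\<integral>y. deriv (\<lambda>s. U y * Fent p (u s y / U y)
                           + V y * Fent p (v s y / V y)) t \<partial>lborel)) (at t))"

end

theory Submission
  imports Defs
begin

lemma integral_deriv_zero:
  fixes f f' :: "real \<Rightarrow> real"
  assumes der: "\<And>y. (f has_real_derivative f' y) (at y)"
    and int: "integrable lborel f'"
    and top: "(f \<longlongrightarrow> 0) at_top" and bot: "(f \<longlongrightarrow> 0) at_bot"
  shows "integral\<^sup>L lborel f' = 0"
proof -
  define s where "s = (\<lambda>n::nat. \<lambda>x. indicator {- real n..real n} x *\<^sub>R f' x)"
  have meas: "f' \<in> borel_measurable lborel" using int by auto
  have lim: "(\<lambda>n. integral\<^sup>L lborel (s n)) \<longlonglongrightarrow> integral\<^sup>L lborel f'"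
  proof (rule integral_dominated_convergence[where w="\<lambda>x. norm (f' x)"])
    show "\<And>i. s i \<in> borel_measurable lborel" unfolding s_def using meas by measurable
    show "integrable lborel (\<lambda>x. norm (f' x))" using int by auto
    show "AE x in lborel. (\<lambda>i. s i x) \<longlonglongrightarrow> f' x"
    proof (rule AE_I2)
      fix x :: real
      obtain N :: nat where "\<bar>x\<bar> \<le> real N" using real_arch_simple by blast
      hence "\<forall>n\<ge>N. s n x = f' x" unfolding s_def by (auto simp: indicator_def)
      thus "(\<lambda>i. s i x) \<longlonglongrightarrow> f' x" by (intro tendsto_eventually) (auto simp: eventually_sequentially)
    qed
    show "\<And>i. AE x in lborel. norm (s i x) \<le> norm (f' x)"
      unfolding s_def by (auto simp: indicator_def)
  qed (use meas in auto)
  have eq: "integral\<^sup>L lborel (s n) = f (real n) - f (- real n)" for n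
  proof -
    have si: "set_integrable lborel {- real n..real n} f'"
      unfolding set_integrable_def using int by (intro integrable_mult_indicator) auto
    have "(f' has_integral (f (real n) - f (- real n))) {- real n..real n}"
      by (rule fundamental_theorem_of_calculus) 
         (auto simp: has_real_derivative_iff_has_vector_derivative[symmetric] intro!: has_field_derivative_at_within der)
    hence "integral {- real n..real n} f' = f (real n) - f (- real n)" by (rule integral_unique)
    moreover have "(LINT x : {- real n..real n} | lborel. f' x) = integral {- real n..real n} f'"
      by (rule set_borel_integral_eq_integral(2)[OF si])
    ultimately show ?thesis unfolding s_def set_lebesgue_integral_def by simp
  qed
  have "(\<lambda>n. f (real n)) \<longlonglongrightarrow> 0" using top filterlim_real_sequentially filterlim_compose by blast
  moreover have "(\<lambda>n. f (- real n)) \<longlonglongrightarrow> 0"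
  proof -
    have "filterlim (\<lambda>n::nat. - real n) at_bot sequentially"
      using filterlim_real_sequentially filterlim_uminus_at_bot by (simp add: filterlim_uminus_at_top)
    thus ?thesis using bot filterlim_compose by blast
  qed
  ultimately have "(\<lambda>n. integral\<^sup>L lborel (s n)) \<longlonglongrightarrow> 0" unfolding eq using tendsto_diff by fastforce
  with lim show ?thesis using LIMSEQ_unique by blast
qed
lemma Fent_deriv:
  assumes "p \<noteq> 0" "p \<noteq> 1" "z > 0"
  shows "(Fent p has_real_derivative Fent' p z) (at z)"
proof -
  have "((\<lambda>z. (z powr p - p * z + p - 1) / (p * (p - 1))) has_real_derivative
          (p * z powr (p - 1) - p * 1 + 0 - 0) / (p * (p - 1))) (at z)"
    using assms by (auto intro!: derivative_eq_intros)
  moreover have "(p * z powr (p - 1) - p * 1 + 0 - 0) / (p * (p - 1)) = Fent' p z"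
    using assms by (simp add: Fent'_def field_simps)
  moreover have "Fent p = (\<lambda>z. (z powr p - p * z + p - 1) / (p * (p - 1)))"
    using assms by (auto simp: Fent_def fun_eq_iff)
  ultimately show ?thesis by simp
qed

lemma Fent'_deriv:
  assumes "p \<noteq> 0" "p \<noteq> 1" "z > 0"
  shows "(Fent' p has_real_derivative z powr (p - 2)) (at z)"
proof -
  have "((\<lambda>z. (z powr (p - 1) - 1) / (p - 1)) has_real_derivative
          ((p - 1) * z powr (p - 1 - 1) - 0) / (p - 1)) (at z)"
    using assms by (auto intro!: derivative_eq_intros)
  moreover have "((p - 1) * z powr (p - 1 - 1) - 0) / (p - 1) = z powr (p - 2)"
    using assms by (simp add: field_simps)
  moreover have "Fent' p = (\<lambda>z. (z powr (p - 1) - 1) / (p - 1))"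
    using assms by (auto simp: Fent'_def fun_eq_iff)
  ultimately show ?thesis by simp
qed

lemma component:
  fixes p d :: real and W L R w :: "real \<Rightarrow> real"
  assumes p0: "p \<noteq> 0" "p \<noteq> 1"
    and W: "C2 W" "\<And>y. W y > 0"
    and prof: "\<And>y. d * deriv (deriv W) y + y / 2 * deriv W y + L y = 0"
    and w: "C2 w" "\<And>y. w y > 0"
    and rdef: "r = (\<lambda>y. w y / W y)"
    and i1: "integrable lborel (\<lambda>y. W y * Fent p (r y))"
    and i2: "integrable lborel (\<lambda>y. d * W y * r y powr (p - 2) * (deriv r y)\<^sup>2)"
    and i3: "integrable lborel (\<lambda>y. L y * Fent p (r y))"
    and i4: "integrable lborel (\<lambda>y. L y * r y * Fent' p (r y))"
    and i5: "integrable lborel (\<lambda>y. Fent' p (r y) * R y)"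
    and i6: "integrable lborel (\<lambda>y. Fent' p (r y) * d * deriv (\<lambda>z. W z * deriv r z) y)"
    and i7: "integrable lborel (\<lambda>y. Fent' p (r y) * (d * deriv W y + y / 2 * W y) * deriv r y)"
    and l1: "((\<lambda>y. W y * Fent' p (r y) * deriv r y) \<longlongrightarrow> 0) at_top"
    and l2: "((\<lambda>y. W y * Fent' p (r y) * deriv r y) \<longlongrightarrow> 0) at_bot"
    and l3: "((\<lambda>y. (d * deriv W y + y / 2 * W y) * Fent p (r y)) \<longlongrightarrow> 0) at_top"
    and l4: "((\<lambda>y. (d * deriv W y + y / 2 * W y) * Fent p (r y)) \<longlongrightarrow> 0) at_bot"
  shows "integrable lborel (\<lambda>y. Fent' p (r y) * (d * deriv (deriv w) y + y / 2 * deriv w y + R y))"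
    "integral\<^sup>L lborel (\<lambda>y. Fent' p (r y) * (d * deriv (deriv w) y + y / 2 * deriv w y + R y)) =
       - integral\<^sup>L lborel (\<lambda>y. d * W y * r y powr (p - 2) * (deriv r y)\<^sup>2)
       + integral\<^sup>L lborel (\<lambda>y. L y * Fent p (r y))
       - 1 / 2 * integral\<^sup>L lborel (\<lambda>y. W y * Fent p (r y))
       - integral\<^sup>L lborel (\<lambda>y. L y * r y * Fent' p (r y))
       + integral\<^sup>L lborel (\<lambda>y. Fent' p (r y) * R y)"
proof -
  have dW: "\<And>y. (W has_real_derivative deriv W y) (at y)"
    and ddW: "\<And>y. (deriv W has_real_derivative deriv (deriv W) y) (at y)"
    using W(1) unfolding C2_def by auto
  have dw: "\<And>y. (w has_real_derivative deriv w y) (at y)"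
    and ddw: "\<And>y. (deriv w has_real_derivative deriv (deriv w) y) (at y)"
    using w(1) unfolding C2_def by auto
  have rpos: "\<And>y. r y > 0" using W(2) w(2) rdef by auto
  have dr0: "(r has_real_derivative (deriv w y * W y - w y * deriv W y) / (W y * W y)) (at y)" for y
    unfolding rdef using W(2)[of y] by (intro DERIV_divide dw dW) auto
  have dr_eq: "deriv r y = (deriv w y * W y - w y * deriv W y) / (W y * W y)" for y
    using dr0 by (rule DERIV_imp_deriv)
  have dr: "(r has_real_derivative deriv r y) (at y)" for y using dr0 dr_eq by simp
  have g_eq: "(\<lambda>z. W z * deriv r z) = (\<lambda>z. deriv w z - deriv W z * r z)"
  proof
    fix z
    show "W z * deriv r z = deriv w z - deriv W z * r z"
      unfolding dr_eq using W(2)[of z] by (simp add: rdef field_simps)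
  qed
  define g' where "g' y = deriv (deriv w) y - (deriv (deriv W) y * r y + deriv W y * deriv r y)" for y
  have dg0: "((\<lambda>z. W z * deriv r z) has_real_derivative g' y) (at y)" for y
    unfolding g_eq g'_def by (rule DERIV_cong[OF DERIV_diff[OF ddw DERIV_mult[OF ddW dr]]]) simp
  have dg_eq: "deriv (\<lambda>z. W z * deriv r z) y = g' y" for y using dg0 by (rule DERIV_imp_deriv)
  have Wr: "W y * deriv r y = deriv w y - deriv W y * r y" for y
    using fun_cong[OF g_eq, of y] by simp
  have wr: "w y = W y * r y" for y using W(2)[of y] rdef by simp
  define A where "A y = Fent' p (r y) * d * deriv (\<lambda>z. W z * deriv r z) y" for y
  define B where "B y = Fent' p (r y) * (d * deriv W y + y / 2 * W y) * deriv r y" for y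
  define C where "C y = L y * r y * Fent' p (r y)" for y
  define D where "D y = Fent' p (r y) * R y" for y
  have decomp: "Fent' p (r y) * (d * deriv (deriv w) y + y / 2 * deriv w y + R y) = A y + B y - C y + D y" for y
  proof -
    have "d * deriv (deriv w) y + y / 2 * deriv w y
          = d * g' y + (d * deriv W y + y / 2 * W y) * deriv r y - L y * r y"
      unfolding g'_def using prof[of y] Wr[of y] by algebra
    thus ?thesis unfolding A_def B_def C_def D_def dg_eq by algebra
  qed
  have iA: "integrable lborel A" using i6 unfolding A_def .
  have iB: "integrable lborel B" using i7 unfolding B_def .
  have iC: "integrable lborel C" using i4 unfolding C_def .
  have iD: "integrable lborel D" using i5 unfolding D_def .
  have int_eq: "(\<lambda>y. Fent' p (r y) * (d * deriv (deriv w) y + y / 2 * deriv w y + R y)) = (\<lambda>y. A y + B y - C y + D y)"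
    using decomp by auto
  show "integrable lborel (\<lambda>y. Fent' p (r y) * (d * deriv (deriv w) y + y / 2 * deriv w y + R y))"
    unfolding int_eq using iA iB iC iD by auto
  define fish where "fish y = d * W y * r y powr (p - 2) * (deriv r y)\<^sup>2" for y
  have ibp1: "integral\<^sup>L lborel (\<lambda>y. fish y + A y) = 0"
  proof (rule integral_deriv_zero)
    fix y
    have "((\<lambda>y. d * (Fent' p (r y) * (W y * deriv r y))) has_real_derivative
            d * ((r y powr (p - 2) * deriv r y) * (W y * deriv r y) + g' y * Fent' p (r y))) (at y)"
      by (intro DERIV_cmult DERIV_mult DERIV_chain2[OF Fent'_deriv[OF p0 rpos] dr] dg0)
    moreover have "d * ((r y powr (p - 2) * deriv r y) * (W y * deriv r y) + g' y * Fent' p (r y)) = fish y + A y"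
      unfolding fish_def A_def dg_eq by (simp add: algebra_simps power2_eq_square)
    ultimately show "((\<lambda>y. d * (Fent' p (r y) * (W y * deriv r y))) has_real_derivative fish y + A y) (at y)"
      by simp
  next
    show "integrable lborel (\<lambda>y. fish y + A y)" using i2 iA unfolding fish_def by auto
  next
    have e: "(\<lambda>y. d * (Fent' p (r y) * (W y * deriv r y))) = (\<lambda>y. d * (W y * Fent' p (r y) * deriv r y))"
      by (auto simp: algebra_simps)
    show "((\<lambda>y. d * (Fent' p (r y) * (W y * deriv r y))) \<longlongrightarrow> 0) at_top"
      unfolding e using tendsto_mult_right_zero[OF l1] by simp
    show "((\<lambda>y. d * (Fent' p (r y) * (W y * deriv r y))) \<longlongrightarrow> 0) at_bot"
      unfolding e using tendsto_mult_right_zero[OF l2] by simp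
  qed
  define G where "G y = (1 / 2 * W y - L y) * Fent p (r y)" for y
  have iG: "integrable lborel G" unfolding G_def left_diff_distrib using i1 i3 by (auto simp: mult.assoc)
  have ibp2: "integral\<^sup>L lborel (\<lambda>y. G y + B y) = 0"
  proof (rule integral_deriv_zero[OF _ _ l3 l4])
    fix y
    have Dh: "((\<lambda>x::real. x / 2) has_real_derivative 1 / 2) (at y)"
      by (auto intro!: derivative_eq_intros)
    have "((\<lambda>y. (d * deriv W y + y / 2 * W y) * Fent p (r y)) has_real_derivative
            (d * deriv (deriv W) y + (1 / 2 * W y + deriv W y * (y / 2))) * Fent p (r y)
            + (Fent' p (r y) * deriv r y) * (d * deriv W y + y / 2 * W y)) (at y)"
      by (intro DERIV_mult DERIV_add DERIV_cmult ddW Dh dW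
            DERIV_chain2[OF Fent_deriv[OF p0 rpos] dr])
    moreover have "(d * deriv (deriv W) y + (1 / 2 * W y + deriv W y * (y / 2))) * Fent p (r y)
            + (Fent' p (r y) * deriv r y) * (d * deriv W y + y / 2 * W y) = G y + B y"
    proof -
      have "d * deriv (deriv W) y + y / 2 * deriv W y = - L y" using prof[of y] by linarith
      thus ?thesis unfolding G_def B_def by algebra
    qed
    ultimately show "((\<lambda>y. (d * deriv W y + y / 2 * W y) * Fent p (r y)) has_real_derivative G y + B y) (at y)"
      by simp
  qed (use iG iB in auto)
  have "integral\<^sup>L lborel (\<lambda>y. A y + B y - C y + D y)
      = integral\<^sup>L lborel A + integral\<^sup>L lborel B - integral\<^sup>L lborel C + integral\<^sup>L lborel D"
    using iA iB iC iD by simp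
  moreover have "integral\<^sup>L lborel A = - integral\<^sup>L lborel fish"
    using ibp1 i2 iA unfolding fish_def by simp
  moreover have "integral\<^sup>L lborel B = - integral\<^sup>L lborel G"
    using ibp2 iG iB by simp
  moreover have "integral\<^sup>L lborel G = 1 / 2 * integral\<^sup>L lborel (\<lambda>y. W y * Fent p (r y)) - integral\<^sup>L lborel (\<lambda>y. L y * Fent p (r y))"
  proof -
    have "integral\<^sup>L lborel G = integral\<^sup>L lborel (\<lambda>y. 1 / 2 * (W y * Fent p (r y)) - L y * Fent p (r y))"
      unfolding G_def by (simp add: algebra_simps)
    also have "\<dots> = 1 / 2 * integral\<^sup>L lborel (\<lambda>y. W y * Fent p (r y)) - integral\<^sup>L lborel (\<lambda>y. L y * Fent p (r y))"
      using i1 i3 by simp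
    finally show ?thesis .
  qed
  ultimately show "integral\<^sup>L lborel (\<lambda>y. Fent' p (r y) * (d * deriv (deriv w) y + y / 2 * deriv w y + R y)) =
       - integral\<^sup>L lborel (\<lambda>y. d * W y * r y powr (p - 2) * (deriv r y)\<^sup>2)
       + integral\<^sup>L lborel (\<lambda>y. L y * Fent p (r y))
       - 1 / 2 * integral\<^sup>L lborel (\<lambda>y. W y * Fent p (r y))
       - integral\<^sup>L lborel (\<lambda>y. L y * r y * Fent' p (r y))
       + integral\<^sup>L lborel (\<lambda>y. Fent' p (r y) * R y)"
    unfolding int_eq fish_def C_def D_def by simp
qed

lemma component_c:
  fixes p d :: real and W L R w :: "real \<Rightarrow> real"
  assumes p0: "p \<noteq> 0" "p \<noteq> 1"
    and W: "C2 W" "\<And>y. W y > 0"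
    and prof: "\<And>y. d * deriv (deriv W) y + y / 2 * deriv W y + L y = 0"
    and w: "C2 w" "\<And>y. w y > 0"
    and rdef: "r = (\<lambda>y. w y / W y)"
    and H: "integrable lborel (\<lambda>y. W y * Fent p (r y))
      \<and> integrable lborel (\<lambda>y. d * W y * r y powr (p - 2) * (deriv r y)\<^sup>2)
      \<and> integrable lborel (\<lambda>y. L y * Fent p (r y))
      \<and> integrable lborel (\<lambda>y. L y * r y * Fent' p (r y))
      \<and> integrable lborel (\<lambda>y. Fent' p (r y) * R y)
      \<and> integrable lborel (\<lambda>y. Fent' p (r y) * d * deriv (\<lambda>z. W z * deriv r z) y)
      \<and> integrable lborel (\<lambda>y. Fent' p (r y) * (d * deriv W y + y / 2 * W y) * deriv r y)
      \<and> ((\<lambda>y. W y * Fent' p (r y) * deriv r y) \<longlongrightarrow> 0) at_top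
      \<and> ((\<lambda>y. W y * Fent' p (r y) * deriv r y) \<longlongrightarrow> 0) at_bot
      \<and> ((\<lambda>y. (d * deriv W y + y / 2 * W y) * Fent p (r y)) \<longlongrightarrow> 0) at_top
      \<and> ((\<lambda>y. (d * deriv W y + y / 2 * W y) * Fent p (r y)) \<longlongrightarrow> 0) at_bot"
  shows "integrable lborel (\<lambda>y. Fent' p (r y) * (d * deriv (deriv w) y + y / 2 * deriv w y + R y))"
    "integral\<^sup>L lborel (\<lambda>y. Fent' p (r y) * (d * deriv (deriv w) y + y / 2 * deriv w y + R y)) =
       - integral\<^sup>L lborel (\<lambda>y. d * W y * r y powr (p - 2) * (deriv r y)\<^sup>2)
       + integral\<^sup>L lborel (\<lambda>y. L y * Fent p (r y))
       - 1 / 2 * integral\<^sup>L lborel (\<lambda>y. W y * Fent p (r y))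
       - integral\<^sup>L lborel (\<lambda>y. L y * r y * Fent' p (r y))
       + integral\<^sup>L lborel (\<lambda>y. Fent' p (r y) * R y)"
  using H component[OF p0 W prof w rdef] by blast+

lemma Fent_minus:
  assumes "p \<noteq> 0" "p \<noteq> 1" "z > 0"
  shows "Fent p z - z * Fent' p z = (1 - z powr p) / p"
proof -
  define P where "P = z powr p"
  define Q where "Q = z powr (p - 1)"
  have zq: "z * Q = P" using assms powr_mult_base[of z "p - 1"] unfolding P_def Q_def by simp
  have p1: "p - 1 \<noteq> 0" using assms by simp
  have "Fent p z - z * Fent' p z = (P - p * z + p - 1) / (p * (p - 1)) - z * ((Q - 1) / (p - 1))"
    using assms unfolding Fent_def Fent'_def P_def Q_def by simp
  also have "\<dots> = (P - p * z + p - 1) / (p * (p - 1)) - (p * (z * Q - z)) / (p * (p - 1))"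
  proof -
    have "z * ((Q - 1) / (p - 1)) = (z * Q - z) / (p - 1)" by (simp add: right_diff_distrib)
    also have "\<dots> = (p * (z * Q - z)) / (p * (p - 1))"
      by (rule mult_divide_mult_cancel_left[OF assms(1), symmetric])
    finally show ?thesis by simp
  qed
  also have "\<dots> = ((P - p * z + p - 1) - p * (z * Q - z)) / (p * (p - 1))"
    by (rule diff_divide_distrib[symmetric])
  also have "\<dots> = ((p - 1) * (1 - P)) / (p * (p - 1))" unfolding zq by (simp add: algebra_simps)
  also have "\<dots> = (1 - P) / p" using p1 by simp
  finally show ?thesis unfolding P_def .
qed

lemma sign_prod:
  fixes a b q al :: real
  assumes "a > 0" "b > 0" "q \<noteq> 0" "al > 0"
  shows "(a powr q - b powr q) / q * (a powr al - b powr al) \<ge> 0"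
proof -
  have key: "(x powr q - y powr q) / q \<ge> 0 \<and> x powr al - y powr al \<ge> 0" if "0 < y" "y \<le> x" for x y :: real
  proof -
    have "x powr al \<ge> y powr al" using that assms by (intro powr_mono2) auto
    moreover have "(x powr q - y powr q) / q \<ge> 0"
    proof (cases "q > 0")
      case True
      then have "x powr q \<ge> y powr q" using that by (intro powr_mono2) auto
      then show ?thesis using True by simp
    next
      case False
      then have q: "q < 0" using assms by simp
      have "x powr q \<le> y powr q"
      proof (cases "y = x")
        case False
        then show ?thesis using powr_less_mono2_neg[OF q, of y x] that by simp
      qed simp
      then show ?thesis using q by (simp add: divide_nonpos_neg)
    qed
    ultimately show ?thesis by simp
  qed
  show ?thesis
  proof (cases "b \<le> a")
    case True
    then show ?thesis using key[of b a] assms mult_nonneg_nonneg by blast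
  next
    case False
    then have k: "(b powr q - a powr q) / q \<ge> 0 \<and> b powr al - a powr al \<ge> 0" using key[of a b] assms by simp
    have "(a powr q - b powr q) / q * (a powr al - b powr al) = (b powr q - a powr q) / q * (b powr al - a powr al)"
      by (simp add: field_simps)
    then show ?thesis using k mult_nonneg_nonneg by metis
  qed
qed

theorem mainTheorem3:
  fixes d1 d2 k \<alpha> \<beta> Am Ap p \<tau> :: real
    and U V \<Lambda> :: "real \<Rightarrow> real"
    and u v :: "real \<Rightarrow> real \<Rightarrow> real"
  assumes "d1 > 0" and "d2 > 0" and "k > 0"
    and "\<alpha> \<ge> 1" and "\<beta> \<ge> 1" and "\<alpha> = \<beta>"
    and "Am > 0" and "Ap > 0"
    and "p \<noteq> 0" and "p \<noteq> 1"
    and "similarity_profile d1 d2 \<alpha> \<beta> Am Ap U V \<Lambda>"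
    and "scaled_solution p d1 d2 k \<alpha> \<beta> Am Ap U V \<Lambda> u v"
    and "\<tau> > 0"
  shows "((\<lambda>s. rel_entropy p U V (u s) (v s)) has_real_derivative
            - ( fisher_info p d1 d2 U V (\<lambda>y. u \<tau> y / U y) (\<lambda>y. v \<tau> y / V y)
              + 1 / 2 * rel_entropy p U V (u \<tau>) (v \<tau>)
              - lambda_info p \<alpha> \<Lambda> (\<lambda>y. u \<tau> y / U y) (\<lambda>y. v \<tau> y / V y)
              + exp \<tau> * react_diss p k \<alpha> U (\<lambda>y. u \<tau> y / U y) (\<lambda>y. v \<tau> y / V y)))
           (at \<tau>)
       \<and> react_diss p k \<alpha> U (\<lambda>y. u \<tau> y / U y) (\<lambda>y. v \<tau> y / V y) \<ge> 0
       \<and> fisher_info p d1 d2 U V (\<lambda>y. u \<tau> y / U y) (\<lambda>y. v \<tau> y / V y) \<ge> 0"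
proof -
  note p0 = assms(9) assms(10)
  have ab: "\<beta> = \<alpha>" using assms(6) by simp
  have tp: "\<tau> > 0" by fact
  have C2U: "C2 U" and C2V: "C2 V" and Upos: "\<And>y. U y > 0" and Vpos: "\<And>y. V y > 0"
    and profU: "\<And>y. d1 * deriv (deriv U) y + y / 2 * deriv U y + \<alpha> * \<Lambda> y = 0"
    and profV: "\<And>y. d2 * deriv (deriv V) y + y / 2 * deriv V y + - \<beta> * \<Lambda> y = 0"
    and UV: "\<And>y. U y powr \<alpha> = V y powr \<beta>"
    using assms(11) unfolding similarity_profile_def by auto
  have cls: "scaled_classical_solution d1 d2 k \<alpha> \<beta> Am Ap u v"
    and admu: "component_admissible p d1 U (\<lambda>y. \<alpha> * \<Lambda> y)
       (\<lambda>t y. exp t * \<alpha> * k * (v t y powr \<beta> - u t y powr \<alpha>)) u"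
    and admv: "component_admissible p d2 V (\<lambda>y. - \<beta> * \<Lambda> y)
       (\<lambda>t y. - exp t * \<beta> * k * (v t y powr \<beta> - u t y powr \<alpha>)) v"
    and ent: "((\<lambda>s. rel_entropy p U V (u s) (v s)) has_real_derivative
           (\<integral>y. deriv (\<lambda>s. U y * Fent p (u s y / U y)
                           + V y * Fent p (v s y / V y)) \<tau> \<partial>lborel)) (at \<tau>)"
    using assms(12) tp unfolding scaled_solution_def by auto
  have upos: "\<And>y. u \<tau> y > 0" and vpos: "\<And>y. v \<tau> y > 0"
    and C2u: "C2 (u \<tau>)" and C2v: "C2 (v \<tau>)"
    and du: "\<And>y. ((\<lambda>s. u s y) has_real_derivative deriv (\<lambda>s. u s y) \<tau>) (at \<tau>)"
    and dv: "\<And>y. ((\<lambda>s. v s y) has_real_derivative deriv (\<lambda>s. v s y) \<tau>) (at \<tau>)"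
    and pdeu: "\<And>y. deriv (\<lambda>s. u s y) \<tau> =
          d1 * deriv (deriv (u \<tau>)) y + y / 2 * deriv (u \<tau>) y
          + exp \<tau> * \<alpha> * k * (v \<tau> y powr \<beta> - u \<tau> y powr \<alpha>)"
    and pdev: "\<And>y. deriv (\<lambda>s. v s y) \<tau> =
          d2 * deriv (deriv (v \<tau>)) y + y / 2 * deriv (v \<tau>) y
          - exp \<tau> * \<beta> * k * (v \<tau> y powr \<beta> - u \<tau> y powr \<alpha>)"
    using cls tp unfolding scaled_classical_solution_def by auto
  note Hu = admu[unfolded component_admissible_def Let_def, rule_format, OF tp]
  note Hv = admv[unfolded component_admissible_def Let_def, rule_format, OF tp]
  note CU = component_c[OF p0 C2U Upos profU C2u upos refl Hu]
  note CV = component_c[OF p0 C2V Vpos profV C2v vpos refl Hv]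
  define \<rho> where "\<rho> = (\<lambda>y. u \<tau> y / U y)"
  define \<zeta> where "\<zeta> = (\<lambda>y. v \<tau> y / V y)"
  have rpos: "\<rho> y > 0" for y using upos[of y] Upos[of y] \<rho>_def by simp
  have zpos: "\<zeta> y > 0" for y using vpos[of y] Vpos[of y] \<zeta>_def by simp
  define X where "X y = v \<tau> y powr \<beta> - u \<tau> y powr \<alpha>" for y
  define Iu where "Iu y = Fent' p (\<rho> y) * (d1 * deriv (deriv (u \<tau>)) y + y / 2 * deriv (u \<tau>) y
        + exp \<tau> * \<alpha> * k * X y)" for y
  define Iv where "Iv y = Fent' p (\<zeta> y) * (d2 * deriv (deriv (v \<tau>)) y + y / 2 * deriv (v \<tau>) y
        + - exp \<tau> * \<beta> * k * X y)" for y
  have iIu: "integrable lborel Iu" using CU(1) unfolding Iu_def \<rho>_def X_def .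
  have iIv: "integrable lborel Iv" using CV(1) unfolding Iv_def \<zeta>_def X_def .
  have pw: "deriv (\<lambda>s. U y * Fent p (u s y / U y) + V y * Fent p (v s y / V y)) \<tau> = Iu y + Iv y" for y
  proof -
    have "((\<lambda>s. U y * Fent p (u s y / U y) + V y * Fent p (v s y / V y)) has_real_derivative
       U y * (Fent' p (u \<tau> y / U y) * (deriv (\<lambda>s. u s y) \<tau> / U y))
       + V y * (Fent' p (v \<tau> y / V y) * (deriv (\<lambda>s. v s y) \<tau> / V y))) (at \<tau>)"
      by (intro DERIV_add DERIV_cmult DERIV_chain2[OF Fent_deriv[OF p0]] DERIV_cdivide du dv)
         (use upos vpos Upos Vpos in auto)
    hence "deriv (\<lambda>s. U y * Fent p (u s y / U y) + V y * Fent p (v s y / V y)) \<tau> =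
       U y * (Fent' p (u \<tau> y / U y) * (deriv (\<lambda>s. u s y) \<tau> / U y))
       + V y * (Fent' p (v \<tau> y / V y) * (deriv (\<lambda>s. v s y) \<tau> / V y))"
      by (rule DERIV_imp_deriv)
    also have "\<dots> = Fent' p (\<rho> y) * deriv (\<lambda>s. u s y) \<tau> + Fent' p (\<zeta> y) * deriv (\<lambda>s. v s y) \<tau>"
      using Upos[of y] Vpos[of y] unfolding \<rho>_def \<zeta>_def by simp
    also have "\<dots> = Iu y + Iv y"
      unfolding Iu_def Iv_def pdeu pdev X_def by simp
    finally show ?thesis .
  qed
  have int_deriv: "(\<integral>y. deriv (\<lambda>s. U y * Fent p (u s y / U y) + V y * Fent p (v s y / V y)) \<tau> \<partial>lborel)
      = integral\<^sup>L lborel Iu + integral\<^sup>L lborel Iv"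
    unfolding pw using iIu iIv by simp
  define Fu where "Fu y = d1 * U y * \<rho> y powr (p - 2) * (deriv \<rho> y)\<^sup>2" for y
  define Fv where "Fv y = d2 * V y * \<zeta> y powr (p - 2) * (deriv \<zeta> y)\<^sup>2" for y
  have CU2: "integral\<^sup>L lborel Iu = - integral\<^sup>L lborel Fu + (\<integral>y. \<alpha> * \<Lambda> y * Fent p (\<rho> y) \<partial>lborel)
     - 1 / 2 * (\<integral>y. U y * Fent p (\<rho> y) \<partial>lborel) - (\<integral>y. \<alpha> * \<Lambda> y * \<rho> y * Fent' p (\<rho> y) \<partial>lborel)
     + (\<integral>y. Fent' p (\<rho> y) * (exp \<tau> * \<alpha> * k * X y) \<partial>lborel)"
    using CU(2) unfolding Iu_def Fu_def X_def \<rho>_def by simp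
  have CV2: "integral\<^sup>L lborel Iv = - integral\<^sup>L lborel Fv + (\<integral>y. - \<beta> * \<Lambda> y * Fent p (\<zeta> y) \<partial>lborel)
     - 1 / 2 * (\<integral>y. V y * Fent p (\<zeta> y) \<partial>lborel) - (\<integral>y. - \<beta> * \<Lambda> y * \<zeta> y * Fent' p (\<zeta> y) \<partial>lborel)
     + (\<integral>y. Fent' p (\<zeta> y) * (- exp \<tau> * \<beta> * k * X y) \<partial>lborel)"
    using CV(2) unfolding Iv_def Fv_def X_def \<zeta>_def by simp
  have fish: "fisher_info p d1 d2 U V \<rho> \<zeta> = integral\<^sup>L lborel Fu + integral\<^sup>L lborel Fv"
    unfolding fisher_info_def Fu_def Fv_def using Hu Hv by (simp add: \<rho>_def \<zeta>_def)
  have entr: "rel_entropy p U V (u \<tau>) (v \<tau>) = (\<integral>y. U y * Fent p (\<rho> y) \<partial>lborel) + (\<integral>y. V y * Fent p (\<zeta> y) \<partial>lborel)"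
    unfolding rel_entropy_def \<rho>_def \<zeta>_def using Hu Hv by simp
  have lam_pw: "1 / p * (\<zeta> y powr p - \<rho> y powr p) * \<alpha> * \<Lambda> y =
      \<alpha> * \<Lambda> y * Fent p (\<rho> y) - \<alpha> * \<Lambda> y * \<rho> y * Fent' p (\<rho> y)
      + (- \<beta> * \<Lambda> y * Fent p (\<zeta> y) - - \<beta> * \<Lambda> y * \<zeta> y * Fent' p (\<zeta> y))" for y
  proof -
    have "\<alpha> * \<Lambda> y * Fent p (\<rho> y) - \<alpha> * \<Lambda> y * \<rho> y * Fent' p (\<rho> y)
      + (- \<beta> * \<Lambda> y * Fent p (\<zeta> y) - - \<beta> * \<Lambda> y * \<zeta> y * Fent' p (\<zeta> y))
      = \<alpha> * \<Lambda> y * (Fent p (\<rho> y) - \<rho> y * Fent' p (\<rho> y))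
        - \<alpha> * \<Lambda> y * (Fent p (\<zeta> y) - \<zeta> y * Fent' p (\<zeta> y))"
      unfolding ab by (simp add: algebra_simps)
    also have "\<dots> = \<alpha> * \<Lambda> y * ((1 - \<rho> y powr p) / p) - \<alpha> * \<Lambda> y * ((1 - \<zeta> y powr p) / p)"
      by (simp only: Fent_minus[OF p0 rpos] Fent_minus[OF p0 zpos])
    also have "\<dots> = 1 / p * (\<zeta> y powr p - \<rho> y powr p) * \<alpha> * \<Lambda> y"
      using assms(9) by (simp add: field_simps)
    finally show ?thesis by simp
  qed
  have lam: "lambda_info p \<alpha> \<Lambda> \<rho> \<zeta> =
      (\<integral>y. \<alpha> * \<Lambda> y * Fent p (\<rho> y) \<partial>lborel) - (\<integral>y. \<alpha> * \<Lambda> y * \<rho> y * Fent' p (\<rho> y) \<partial>lborel)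
      + ((\<integral>y. - \<beta> * \<Lambda> y * Fent p (\<zeta> y) \<partial>lborel) - (\<integral>y. - \<beta> * \<Lambda> y * \<zeta> y * Fent' p (\<zeta> y) \<partial>lborel))"
    unfolding lambda_info_def lam_pw using Hu Hv by (simp add: \<rho>_def \<zeta>_def)
  define RI where "RI y = k * U y powr \<alpha> * (\<alpha> / (p - 1))
          * (\<zeta> y powr (p - 1) - \<rho> y powr (p - 1)) * (\<zeta> y powr \<alpha> - \<rho> y powr \<alpha>)" for y
  have react_pw: "Fent' p (\<rho> y) * (exp \<tau> * \<alpha> * k * X y) + Fent' p (\<zeta> y) * (- exp \<tau> * \<beta> * k * X y)
      = - (exp \<tau> * RI y)" for y
  proof -
    have uu: "u \<tau> y = U y * \<rho> y" and vv: "v \<tau> y = V y * \<zeta> y"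
      using Upos[of y] Vpos[of y] unfolding \<rho>_def \<zeta>_def by auto
    have Xe: "X y = U y powr \<alpha> * (\<zeta> y powr \<alpha> - \<rho> y powr \<alpha>)"
      unfolding X_def uu vv ab using UV[of y] Upos[of y] Vpos[of y] rpos[of y] zpos[of y]
      by (simp add: powr_mult ab right_diff_distrib)
    define q where "q = 1 / (p - 1)"
    have F': "Fent' p z = (z powr (p - 1) - 1) * q" for z
      using p0 unfolding Fent'_def q_def by simp
    have a: "\<alpha> / (p - 1) = \<alpha> * q" unfolding q_def by simp
    show ?thesis unfolding F' RI_def Xe a ab by algebra
  qed
  have iR: "integrable lborel (\<lambda>y. Fent' p (\<rho> y) * (exp \<tau> * \<alpha> * k * X y))"
    using Hu unfolding X_def by (simp add: \<rho>_def)
  have iR2: "integrable lborel (\<lambda>y. Fent' p (\<zeta> y) * (- exp \<tau> * \<beta> * k * X y))"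
    using Hv unfolding X_def by (simp add: \<zeta>_def)
  have react: "(\<integral>y. Fent' p (\<rho> y) * (exp \<tau> * \<alpha> * k * X y) \<partial>lborel)
     + (\<integral>y. Fent' p (\<zeta> y) * (- exp \<tau> * \<beta> * k * X y) \<partial>lborel) = - (exp \<tau> * react_diss p k \<alpha> U \<rho> \<zeta>)"
  proof -
    have "(\<integral>y. Fent' p (\<rho> y) * (exp \<tau> * \<alpha> * k * X y) \<partial>lborel)
     + (\<integral>y. Fent' p (\<zeta> y) * (- exp \<tau> * \<beta> * k * X y) \<partial>lborel)
     = (\<integral>y. Fent' p (\<rho> y) * (exp \<tau> * \<alpha> * k * X y) + Fent' p (\<zeta> y) * (- exp \<tau> * \<beta> * k * X y) \<partial>lborel)"
      using iR iR2 by simp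
    also have "\<dots> = (\<integral>y. - (exp \<tau> * RI y) \<partial>lborel)" unfolding react_pw ..
    also have "\<dots> = - (exp \<tau> * react_diss p k \<alpha> U \<rho> \<zeta>)"
      unfolding react_diss_def RI_def by simp
    finally show ?thesis .
  qed
  have val: "(\<integral>y. deriv (\<lambda>s. U y * Fent p (u s y / U y) + V y * Fent p (v s y / V y)) \<tau> \<partial>lborel)
     = - (fisher_info p d1 d2 U V \<rho> \<zeta> + 1 / 2 * rel_entropy p U V (u \<tau>) (v \<tau>)
          - lambda_info p \<alpha> \<Lambda> \<rho> \<zeta> + exp \<tau> * react_diss p k \<alpha> U \<rho> \<zeta>)"
    using int_deriv CU2 CV2 fish entr lam react by linarith
  have nonneg: "react_diss p k \<alpha> U \<rho> \<zeta> \<ge> 0"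
    unfolding react_diss_def
  proof (rule integral_nonneg_AE, rule AE_I2)
    fix y
    have e: "k * U y powr \<alpha> * (\<alpha> / (p - 1)) * (\<zeta> y powr (p - 1) - \<rho> y powr (p - 1)) * (\<zeta> y powr \<alpha> - \<rho> y powr \<alpha>)
      = (k * U y powr \<alpha> * \<alpha>) * ((\<zeta> y powr (p - 1) - \<rho> y powr (p - 1)) / (p - 1) * (\<zeta> y powr \<alpha> - \<rho> y powr \<alpha>))"
      by (simp add: field_simps)
    have "(\<zeta> y powr (p - 1) - \<rho> y powr (p - 1)) / (p - 1) * (\<zeta> y powr \<alpha> - \<rho> y powr \<alpha>) \<ge> 0"
      using sign_prod[OF zpos rpos, of "p - 1" \<alpha>] p0 assms(4) by simp
    moreover have "k * U y powr \<alpha> * \<alpha> \<ge> 0" using assms(3) assms(4) by simp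
    ultimately show "0 \<le> k * U y powr \<alpha> * (\<alpha> / (p - 1)) * (\<zeta> y powr (p - 1) - \<rho> y powr (p - 1)) * (\<zeta> y powr \<alpha> - \<rho> y powr \<alpha>)"
      unfolding e by (rule mult_nonneg_nonneg[rotated])
  qed
  have fnn: "fisher_info p d1 d2 U V \<rho> \<zeta> \<ge> 0"
    unfolding fisher_info_def
  proof (rule integral_nonneg_AE, rule AE_I2)
    fix y
    show "0 \<le> d1 * U y * \<rho> y powr (p - 2) * (deriv \<rho> y)\<^sup>2 + d2 * V y * \<zeta> y powr (p - 2) * (deriv \<zeta> y)\<^sup>2"
      using assms(1,2) Upos[of y] Vpos[of y] by (intro add_nonneg_nonneg mult_nonneg_nonneg) auto
  qed
  have "((\<lambda>s. rel_entropy p U V (u s) (v s)) has_real_derivative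
            - ( fisher_info p d1 d2 U V \<rho> \<zeta> + 1 / 2 * rel_entropy p U V (u \<tau>) (v \<tau>)
              - lambda_info p \<alpha> \<Lambda> \<rho> \<zeta> + exp \<tau> * react_diss p k \<alpha> U \<rho> \<zeta>)) (at \<tau>)"
    using ent unfolding val .
  with nonneg fnn show ?thesis unfolding \<rho>_def \<zeta>_def by blast
qed

end
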